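(* Let $S=\langle S^G,S^\Delta\rangle$ be a triplestore schema and $r:A\rightarrow C$ a rule (as defined in the context). Then $\mathtt{score}(S,r)$ is a basic schema consequence of $S$ by $r$, i.e. $$\mathbb{I}(\mathtt{score}(S,r))=\bigcup_{I\in\mathbb{I}(S)}\{I' \mid I'\subseteq r(I)\}.$$
   Context: **RDF basics.** $\mathbb{U}$ (URIs), $\mathbb{L}$ (literals) and $\mathbb{V}$ (variables) are pairwise disjoint infinite sets; constants are elements of $\mathbb{U}\cup\mathbb{L}$. - A triple is an element of $\mathbb{U}\times\mathbb{U}\times(\mathbb{U}\cup\mathbb{L})$, and a graph is a finite set of triples. - A triple pattern is an element of $(\mathbb{U}\cup\mathbb{V})\times(\mathbb{U}\cup\mathbb{V})\times(\mathbb{U}\cup\mathbb{L}\cup\mathbb{V})$, and a graph pattern is a finite set of triple patterns. For a triple (pattern) $t$ and $i\in\tau=\{1,2,3\}$, $t[i]$ is its $i$-th element (subject, predicate, object). $vars(P)$ and $const(P)$ denote the variables and constants occurring in $P$. - A mapping is a partial function $m:\mathbb{V}\rightharpoonup\mathbb{U}\cup\mathbb{L}$ with domain $dom(m)$. For a pattern $p$, $m(p)$ replaces each $?v\in dom(m)$ by $m(?v)$ and leaves other variables unchanged. - For a graph pattern $P$ and graph $G$, $[\![P]\!]_G$ is the set of mappings $m$ with $dom(m)=vars(P)$ and $m(P)\subseteq G$. **Rules.** A rule $r:A\rightarrow C$ consists of graph patterns $A$ (antecedent) and $C$ (consequent) with $vars(C)\subseteq vars(A)$, where each variable occurs at most once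 in $C$. Its application to a graph $I$ is $$r(I)=I\cup\bigcup_{m\in[\![A]\!]_I}\{m(C) \text{ if } m(C) \text{ is a graph (i.e. no literal in subject/predicate position)}\}.$$ **Schemas.** A triplestore schema is a pair $S=\langle S^G,S^\Delta\rangle$ where: - $S^G$ is a finite set of triple patterns in which each variable occurs at most once (across and within triples); - $S^\Delta\subseteq vars(S^G)$ (the no-literal set) contains every variable occurring in subject or predicate position in $S^G$. A triple pattern $t^S$ models a triple $t$ (w.r.t. $S^\Delta$) if there is a mapping $\mu$ with $\mu(t^S)=t$ that binds no variable of $S^\Delta$ to a literal. The same definition is used when $t$ contains the special URI $\lambda$ below. A graph $I$ is an instance of $S$ if every triple of $I$ is modelled by some $t^S\in S^G$. $\mathbb{I}(S)$ denotes the set of instances of $S$. **Sandbox graph and rewriting.** Fix a fresh URI $\lambda$ not occurring in $S^G$, $A$ or $C$. - The sandbox graph $\mathbb{S}(S)$ consists of, for each $t^S\in S^G$, the triple obtained by replacing every variable in $t^S$ by $\lambda$. - For a triple pattern $t$, its rewritings are the (up to 8) triple patterns $t'$ with $t'[i]\in\{t[i],\lambda\}$ for each $i$. $\mathbb{Q}(A)$ is the set of graph patterns obtained by choosing one rewriting of each $t\in A$. - $[\![\mathbb{Q}(A)]\!]_{\mathbb{S}(S)}$ is the set of mappings $m$ with $dom(m)=vars(A)$ such that $m(q)\subseteq\mathbb{S}(S)$ for some $q\in\mathbb{Q}(A)$. **Definition of $\mathtt{score}(S,r)$.** Initialise $S'^G=S^G$ and $S'^\Delta=S^\Delta$. Then,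 for each $m\in[\![\mathbb{Q}(A)]\!]_{\mathbb{S}(S)}$: 1. Let $\Delta^m$ be the set of variables occurring in subject or predicate position in some triple of $A$ or $C$. 2. For each $t_A\in A$, let $T(t_A)$ be the set of $t^S\in S^G$ that model $m(t_q)$ for some rewriting $t_q$ of $t_A$ with $m(t_q)\in\mathbb{S}(S)$. - (a) If $t_A[3]$ is a literal $l$, or a variable with $m(t_A[3])=l\in\mathbb{L}$, and no $t^S\in T(t_A)$ has $t^S[3]=l$ or $t^S[3]\in vars(S^G)\setminus S^\Delta$, then discard $m$. - (b) If $t_A[3]$ is a variable with $m(t_A[3])=\lambda$ and no $t^S\in T(t_A)$ has $t^S[3]\in vars(S^G)\setminus S^\Delta$, then add $t_A[3]$ to $\Delta^m$. 3. Discard $m$ if it binds some variable of $\Delta^m$ to a literal. 4. If $m$ is not discarded, let $s^m$ be the substitution that maps each $?v$ with $m(?v)\neq\lambda$ to $m(?v)$, and each $?v$ with $m(?v)=\lambda$ to a fresh variable $?v^*$ (new for each $m$ and not used elsewhere). Add $s^m(C)$ to $S'^G$, and add $s^m(\Delta^m)\cap vars(S'^G)$ to $S'^\Delta$. $\mathtt{score}(S,r)$ is the resulting schema $\langle S'^G,S'^\Delta\rangle$. *)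

theory Defs
  imports Main
begin

datatype ('u,'l,'v) tm = U 'u | L 'l | V 'v

type_synonym ('u,'l,'v) tp = "('u,'l,'v) tm \<times> ('u,'l,'v) tm \<times> ('u,'l,'v) tm"
type_synonym ('u,'l,'v) mp = "'v \<Rightarrow> ('u,'l,'v) tm option"
type_synonym ('u,'l,'v) schema = "('u,'l,'v) tp set \<times> 'v set"

fun is_var :: "('u,'l,'v) tm \<Rightarrow> bool" where
  "is_var (V _) = True" | "is_var _ = False"
fun is_lit :: "('u,'l,'v) tm \<Rightarrow> bool" where
  "is_lit (L _) = True" | "is_lit _ = False"
fun is_uri :: "('u,'l,'v) tm \<Rightarrow> bool" where
  "is_uri (U _) = True" | "is_uri _ = False"

definition pos :: "nat \<Rightarrow> ('u,'l,'v) tp \<Rightarrow> ('u,'l,'v) tm" where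
  "pos i t = (case t of (s,p,ob) \<Rightarrow> if i = 1 then s else if i = 2 then p else ob)"

definition is_triple :: "('u,'l,'v) tp \<Rightarrow> bool" where
  "is_triple t = (is_uri (pos 1 t) \<and> is_uri (pos 2 t) \<and> \<not> is_var (pos 3 t))"

definition is_tpat :: "('u,'l,'v) tp \<Rightarrow> bool" where
  "is_tpat t = (\<not> is_lit (pos 1 t) \<and> \<not> is_lit (pos 2 t))"

definition is_graph :: "('u,'l,'v) tp set \<Rightarrow> bool" where
  "is_graph G = (finite G \<and> (\<forall>t\<in>G. is_triple t))"

definition is_gpat :: "('u,'l,'v) tp set \<Rightarrow> bool" where
  "is_gpat P = (finite P \<and> (\<forall>t\<in>P. is_tpat t))"

fun tvars :: "('u,'l,'v) tm \<Rightarrow> 'v set" where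
  "tvars (V v) = {v}" | "tvars _ = {}"
fun turis :: "('u,'l,'v) tm \<Rightarrow> 'u set" where
  "turis (U u) = {u}" | "turis _ = {}"

definition vars_tp :: "('u,'l,'v) tp \<Rightarrow> 'v set" where
  "vars_tp t = tvars (pos 1 t) \<union> tvars (pos 2 t) \<union> tvars (pos 3 t)"
definition vars :: "('u,'l,'v) tp set \<Rightarrow> 'v set" where
  "vars P = (\<Union>t\<in>P. vars_tp t)"
definition uris :: "('u,'l,'v) tp set \<Rightarrow> 'u set" where
  "uris P = (\<Union>t\<in>P. turis (pos 1 t) \<union> turis (pos 2 t) \<union> turis (pos 3 t))"

definition linear :: "('u,'l,'v) tp set \<Rightarrow> bool" where
  "linear P = (\<forall>t\<in>P. \<forall>t'\<in>P. \<forall>i\<in>{1,2,3}. \<forall>j\<in>{1,2,3}.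
       is_var (pos i t) \<and> pos i t = pos j t' \<longrightarrow> t = t' \<and> i = j)"

definition wf_map :: "('u,'l,'v) mp \<Rightarrow> bool" where
  "wf_map m = (\<forall>c\<in>ran m. \<not> is_var c)"

fun app_tm :: "('u,'l,'v) mp \<Rightarrow> ('u,'l,'v) tm \<Rightarrow> ('u,'l,'v) tm" where
  "app_tm m (V v) = (case m v of Some c \<Rightarrow> c | None \<Rightarrow> V v)"
| "app_tm m c = c"

definition app_tp :: "('u,'l,'v) mp \<Rightarrow> ('u,'l,'v) tp \<Rightarrow> ('u,'l,'v) tp" where
  "app_tp m t = (app_tm m (pos 1 t), app_tm m (pos 2 t), app_tm m (pos 3 t))"

definition app_gp :: "('u,'l,'v) mp \<Rightarrow> ('u,'l,'v) tp set \<Rightarrow> ('u,'l,'v) tp set" where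
  "app_gp m P = app_tp m ` P"

definition eval :: "('u,'l,'v) tp set \<Rightarrow> ('u,'l,'v) tp set \<Rightarrow> ('u,'l,'v) mp set" where
  "eval P G = {m. dom m = vars P \<and> wf_map m \<and> app_gp m P \<subseteq> G}"

definition rule_ok :: "('u,'l,'v) tp set \<Rightarrow> ('u,'l,'v) tp set \<Rightarrow> bool" where
  "rule_ok A C = (is_gpat A \<and> is_gpat C \<and> vars C \<subseteq> vars A \<and> linear C)"

definition rule_app :: "('u,'l,'v) tp set \<Rightarrow> ('u,'l,'v) tp set \<Rightarrow> ('u,'l,'v) tp set \<Rightarrow> ('u,'l,'v) tp set" where
  "rule_app A C I = I \<union> \<Union> {app_gp m C | m. m \<in> eval A I \<and> is_graph (app_gp m C)}"

definition schema_ok :: "('u,'l,'v) schema \<Rightarrow> bool" where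
  "schema_ok S = (is_gpat (fst S) \<and> linear (fst S) \<and> snd S \<subseteq> vars (fst S) \<and>
     (\<forall>t\<in>fst S. \<forall>i\<in>{1,2}. \<forall>v. pos i t = V v \<longrightarrow> v \<in> snd S))"

definition models :: "'v set \<Rightarrow> ('u,'l,'v) tp \<Rightarrow> ('u,'l,'v) tp \<Rightarrow> bool" where
  "models D tS t = (\<exists>\<mu>. wf_map \<mu> \<and> app_tp \<mu> tS = t \<and> (\<forall>v\<in>D. \<forall>l. \<mu> v \<noteq> Some (L l)))"

definition instances :: "('u,'l,'v) schema \<Rightarrow> ('u,'l,'v) tp set set" where
  "instances S = {I. is_graph I \<and> (\<forall>t\<in>I. \<exists>tS\<in>fst S. models (snd S) tS t)}"

section \<open>Sandbox graph and rewritings (lam is the fresh URI \<lambda>)\<close>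

fun sb_tm :: "'u \<Rightarrow> ('u,'l,'v) tm \<Rightarrow> ('u,'l,'v) tm" where
  "sb_tm lam (V _) = U lam" | "sb_tm lam c = c"

definition sandbox :: "'u \<Rightarrow> ('u,'l,'v) tp set \<Rightarrow> ('u,'l,'v) tp set" where
  "sandbox lam SG = (\<lambda>t. (sb_tm lam (pos 1 t), sb_tm lam (pos 2 t), sb_tm lam (pos 3 t))) ` SG"

definition rewritings :: "'u \<Rightarrow> ('u,'l,'v) tp \<Rightarrow> ('u,'l,'v) tp set" where
  "rewritings lam t = {t'. \<forall>i\<in>{1,2,3}. pos i t' \<in> {pos i t, U lam}}"

definition Qrw :: "'u \<Rightarrow> ('u,'l,'v) tp set \<Rightarrow> ('u,'l,'v) tp set set" where
  "Qrw lam A = {f ` A | f. \<forall>t\<in>A. f t \<in> rewritings lam t}"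

definition sb_eval :: "'u \<Rightarrow> ('u,'l,'v) tp set \<Rightarrow> ('u,'l,'v) tp set \<Rightarrow> ('u,'l,'v) mp set" where
  "sb_eval lam A SG = {m. dom m = vars A \<and> wf_map m \<and>
       (\<exists>q\<in>Qrw lam A. app_gp m q \<subseteq> sandbox lam SG)}"

definition Tset :: "'u \<Rightarrow> ('u,'l,'v) schema \<Rightarrow> ('u,'l,'v) mp \<Rightarrow> ('u,'l,'v) tp \<Rightarrow> ('u,'l,'v) tp set" where
  "Tset lam S m tA = {tS\<in>fst S. \<exists>tq\<in>rewritings lam tA.
       app_tp m tq \<in> sandbox lam (fst S) \<and> models (snd S) tS (app_tp m tq)}"

definition open_vars :: "('u,'l,'v) schema \<Rightarrow> 'v set" where
  "open_vars S = vars (fst S) - snd S"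

definition cond_a :: "'u \<Rightarrow> ('u,'l,'v) schema \<Rightarrow> ('u,'l,'v) mp \<Rightarrow> ('u,'l,'v) tp \<Rightarrow> bool" where
  "cond_a lam S m tA = (\<exists>l. (pos 3 tA = L l \<or> (\<exists>v. pos 3 tA = V v \<and> m v = Some (L l))) \<and>
      \<not> (\<exists>tS\<in>Tset lam S m tA. pos 3 tS = L l \<or> (\<exists>w. pos 3 tS = V w \<and> w \<in> open_vars S)))"

definition cond_b :: "'u \<Rightarrow> ('u,'l,'v) schema \<Rightarrow> ('u,'l,'v) mp \<Rightarrow> ('u,'l,'v) tp \<Rightarrow> bool" where
  "cond_b lam S m tA = ((\<exists>v. pos 3 tA = V v \<and> m v = Some (U lam)) \<and>
      \<not> (\<exists>tS\<in>Tset lam S m tA. \<exists>w. pos 3 tS = V w \<and> w \<in> open_vars S))"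

definition Delta_m :: "'u \<Rightarrow> ('u,'l,'v) schema \<Rightarrow> ('u,'l,'v) tp set \<Rightarrow> ('u,'l,'v) tp set \<Rightarrow> ('u,'l,'v) mp \<Rightarrow> 'v set" where
  "Delta_m lam S A C m =
     {v. \<exists>t\<in>A \<union> C. \<exists>i\<in>{1,2}. pos i t = V v} \<union>
     {v. \<exists>tA\<in>A. pos 3 tA = V v \<and> cond_b lam S m tA}"

definition discarded :: "'u \<Rightarrow> ('u,'l,'v) schema \<Rightarrow> ('u,'l,'v) tp set \<Rightarrow> ('u,'l,'v) tp set \<Rightarrow> ('u,'l,'v) mp \<Rightarrow> bool" where
  "discarded lam S A C m = ((\<exists>tA\<in>A. cond_a lam S m tA) \<or>
      (\<exists>v\<in>Delta_m lam S A C m. \<exists>l. m v = Some (L l)))"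

definition kept :: "'u \<Rightarrow> ('u,'l,'v) schema \<Rightarrow> ('u,'l,'v) tp set \<Rightarrow> ('u,'l,'v) tp set \<Rightarrow> ('u,'l,'v) mp set" where
  "kept lam S A C = {m \<in> sb_eval lam A (fst S). \<not> discarded lam S A C m}"

text \<open>The substitution s^m; fr m v is the fresh variable ?v^* chosen for m.\<close>
fun sm_tm :: "'u \<Rightarrow> (('u,'l,'v) mp \<Rightarrow> 'v \<Rightarrow> 'v) \<Rightarrow> ('u,'l,'v) mp \<Rightarrow> ('u,'l,'v) tm \<Rightarrow> ('u,'l,'v) tm" where
  "sm_tm lam fr m (V v) = (case m v of Some c \<Rightarrow> (if c = U lam then V (fr m v) else c) | None \<Rightarrow> V v)"
| "sm_tm lam fr m c = c"

definition sm_gp :: "'u \<Rightarrow> (('u,'l,'v) mp \<Rightarrow> 'v \<Rightarrow> 'v) \<Rightarrow> ('u,'l,'v) mp \<Rightarrow> ('u,'l,'v) tp set \<Rightarrow> ('u,'l,'v) tp set" where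
  "sm_gp lam fr m P = (\<lambda>t. (sm_tm lam fr m (pos 1 t), sm_tm lam fr m (pos 2 t), sm_tm lam fr m (pos 3 t))) ` P"

definition score :: "'u \<Rightarrow> (('u,'l,'v) mp \<Rightarrow> 'v \<Rightarrow> 'v) \<Rightarrow> ('u,'l,'v) schema \<Rightarrow>
     ('u,'l,'v) tp set \<Rightarrow> ('u,'l,'v) tp set \<Rightarrow> ('u,'l,'v) schema" where
  "score lam fr S A C =
    (let K = kept lam S A C;
         G' = fst S \<union> (\<Union>m\<in>K. sm_gp lam fr m C);
         D' = snd S \<union> ((\<Union>m\<in>K. {w. \<exists>v\<in>Delta_m lam S A C m. sm_tm lam fr m (V v) = V w}) \<inter> vars G')
     in (G', D'))"

definition fresh_choice :: "'u \<Rightarrow> (('u,'l,'v) mp \<Rightarrow> 'v \<Rightarrow> 'v) \<Rightarrow> ('u,'l,'v) schema \<Rightarrow>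
     ('u,'l,'v) tp set \<Rightarrow> ('u,'l,'v) tp set \<Rightarrow> bool" where
  "fresh_choice lam fr S A C =
     (lam \<notin> uris (fst S) \<union> uris A \<union> uris C \<and>
      (let P = {(m,v). m \<in> sb_eval lam A (fst S) \<and> m v = Some (U lam)} in
        inj_on (\<lambda>(m,v). fr m v) P \<and>
        (\<forall>(m,v)\<in>P. fr m v \<notin> vars (fst S) \<union> vars A \<union> vars C)))"

end

theory Submission imports Defs begin

lemma pos_simps[simp]: "pos 1 (a,b,c) = a" "pos 2 (a,b,c) = b" "pos 3 (a,b,c) = c" "pos (Suc 0) (a,b,c) = a"
  by (simp_all add: pos_def)

lemma tp_eq: "(t::('u,'l,'v) tp) = (pos 1 t, pos 2 t, pos 3 t)"
  by (cases t) (simp add: pos_def)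

lemma tp_ext: "pos 1 t = pos 1 t' \<Longrightarrow> pos 2 t = pos 2 t' \<Longrightarrow> pos 3 t = pos 3 t' \<Longrightarrow> (t::('u,'l,'v) tp) = t'"
  by (metis tp_eq)

lemma pos_cases: "pos i t = pos 1 t \<or> pos i t = pos 2 t \<or> pos i t = pos 3 t"
  by (cases t) (auto simp: pos_def)

lemma pos_cases': "P (pos i t) \<Longrightarrow> P (pos 1 t) \<or> P (pos 2 t) \<or> P (pos 3 t)"
  by (cases t) (auto simp: pos_def split: if_splits)

lemma pos_app_tp[simp]: "pos i (app_tp \<mu> t) = app_tm \<mu> (pos i t)"
  by (cases t) (auto simp: pos_def app_tp_def)

definition sbt :: "'u \<Rightarrow> ('u,'l,'v) tp \<Rightarrow> ('u,'l,'v) tp" where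
  "sbt lam t = (sb_tm lam (pos 1 t), sb_tm lam (pos 2 t), sb_tm lam (pos 3 t))"

lemma app_tp_eqI: assumes "\<And>i. app_tm m (pos i c) = pos i t" shows "app_tp m c = t"
  apply (rule tp_ext)
  using assms apply simp_all done

lemma pos_sbt[simp]: "pos i (sbt lam t) = sb_tm lam (pos i t)"
  by (cases t) (auto simp: pos_def sbt_def)

lemma sandbox_eq: "sandbox lam SG = sbt lam ` SG"
  by (simp add: sandbox_def sbt_def)

definition smt :: "'u \<Rightarrow> (('u,'l,'v) mp \<Rightarrow> 'v \<Rightarrow> 'v) \<Rightarrow> ('u,'l,'v) mp \<Rightarrow> ('u,'l,'v) tp \<Rightarrow> ('u,'l,'v) tp" where
  "smt lam fr m t = (sm_tm lam fr m (pos 1 t), sm_tm lam fr m (pos 2 t), sm_tm lam fr m (pos 3 t))"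

lemma pos_smt[simp]: "pos i (smt lam fr m t) = sm_tm lam fr m (pos i t)"
  by (cases t) (auto simp: pos_def smt_def)

lemma sm_gp_eq: "sm_gp lam fr m P = smt lam fr m ` P"
  by (simp add: sm_gp_def smt_def)

lemma app_tm_nonvar: "\<not> is_var c \<Longrightarrow> app_tm m c = c"
  by (cases c) auto

lemma app_tm_Some: "m x = Some d \<Longrightarrow> app_tm m (V x) = d"
  by simp

lemma wf_map_D: "wf_map m \<Longrightarrow> m x = Some d \<Longrightarrow> \<not> is_var d"
  by (auto simp: wf_map_def ran_def)

lemma app_tm_var_nonvar: "app_tm m (V x) = d \<Longrightarrow> \<not> is_var d \<Longrightarrow> m x = Some d"
  by (cases "m x") auto

lemma vars_tp_I: assumes "pos i t = V x" shows "x \<in> vars_tp t"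
proof -
  have "x \<in> tvars (pos i t)" using assms by simp
  from pos_cases'[where P="\<lambda>c. x \<in> tvars c", OF this] show ?thesis unfolding vars_tp_def by blast
qed

lemma vars_I: "t \<in> P \<Longrightarrow> pos i t = V x \<Longrightarrow> x \<in> vars P"
  using vars_tp_I[of i t x] unfolding vars_def by auto

lemma tvars_D: "x \<in> tvars c \<Longrightarrow> c = V x"
  by (cases c) auto

lemma vars_tp_E: assumes "x \<in> vars_tp t" obtains i where "i \<in> {1,2,3}" "pos i t = V x"
proof -
  from assms have "x \<in> tvars (pos 1 t) \<or> x \<in> tvars (pos 2 t) \<or> x \<in> tvars (pos 3 t)"
    unfolding vars_tp_def Un_iff by blast
  then show ?thesis
  proof (elim disjE)
    assume a: "x \<in> tvars (pos 1 t)" show ?thesis using that[of 1] tvars_D[OF a] by simp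
  next
    assume a: "x \<in> tvars (pos 2 t)" show ?thesis using that[of 2] tvars_D[OF a] by simp
  next
    assume a: "x \<in> tvars (pos 3 t)" show ?thesis using that[of 3] tvars_D[OF a] by simp
  qed
qed

lemma vars_E: assumes "x \<in> vars P" obtains t i where "t \<in> P" "i \<in> {1,2,3}" "pos i t = V x"
  using assms unfolding vars_def by (meson UN_E vars_tp_E)

lemma uris_lam: assumes "t \<in> P" "lam \<notin> uris P" shows "pos i t \<noteq> U lam"
proof
  assume "pos i t = U lam"
  from pos_cases'[where P="\<lambda>c. c = U lam", OF this] assms show False by (auto simp: uris_def)
qed

lemma is_triple_iff: "is_triple t \<longleftrightarrow> (\<exists>u. pos 1 t = U u) \<and> (\<exists>u. pos 2 t = U u) \<and> \<not> is_var (pos 3 t)"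
proof -
  have u: "\<And>c. is_uri c \<longleftrightarrow> (\<exists>u. c = U u)" by (case_tac c) auto
  show ?thesis unfolding is_triple_def u ..
qed

lemma sm_tm_V: "m v = Some d \<Longrightarrow> sm_tm lam fr m (V v) = (if d = U lam then V (fr m v) else d)"
  by (cases "d = U lam") auto

lemma sb_tm_nonvar: "\<not> is_var c \<Longrightarrow> sb_tm lam c = c"
  by (cases c) auto

lemma sm_tm_nonvar: "\<not> is_var c \<Longrightarrow> sm_tm lam fr m c = c"
  by (cases c) auto

lemma nonlit_nonvar: "\<not> is_lit c \<Longrightarrow> \<not> is_var c \<Longrightarrow> \<exists>u. c = U u"
  by (cases c) auto

lemma triple_nonvar: "is_triple t \<Longrightarrow> \<not> is_var (pos i t)"
proof
  assume a: "is_triple t" "is_var (pos i t)"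
  from pos_cases'[where P=is_var, OF a(2)] a(1) show False
    unfolding is_triple_iff by auto
qed

lemma uri_cases: "(\<forall>l. c \<noteq> L l) \<Longrightarrow> \<not> is_var c \<Longrightarrow> \<exists>u. c = U u"
  by (cases c) auto

lemma triple_uri1: "is_triple t \<Longrightarrow> \<exists>u. pos 1 t = U u"
  unfolding is_triple_iff by blast
lemma triple_uri2: "is_triple t \<Longrightarrow> \<exists>u. pos 2 t = U u"
  unfolding is_triple_iff by blast

lemma models_sbt: "models D (tS::('u,'l,'v) tp) (sbt lam tS)"
proof -
  have "app_tm (\<lambda>_. Some (U lam)) c = sb_tm lam c" for c :: "('u,'l,'v) tm"
    by (cases c) auto
  then have "app_tp (\<lambda>_. Some (U lam)) tS = sbt lam tS"
    by (intro tp_ext) simp_all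
  moreover have "wf_map (\<lambda>_::'v. Some (U lam :: ('u,'l,'v) tm))"
    by (auto simp: wf_map_def ran_def)
  ultimately show ?thesis unfolding models_def by auto
qed

lemma app_tp_cong: assumes "\<And>w. w \<in> vars_tp t \<Longrightarrow> \<mu> w = \<mu>' w"
  shows "app_tp \<mu> t = app_tp \<mu>' t"
proof -
  have "app_tm \<mu> (pos i t) = app_tm \<mu>' (pos i t)" for i
  proof (cases "pos i t")
    case (V w)
    then have "w \<in> vars_tp t" by (rule vars_tp_I)
    then show ?thesis using V assms by simp
  qed auto
  then show ?thesis by (intro tp_ext) simp_all
qed

lemma finite_tvars: "finite (tvars c)"
  by (cases c) auto

lemma finite_vars: "finite P \<Longrightarrow> finite (vars P)"
  unfolding vars_def vars_tp_def by (simp add: finite_tvars)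

lemma finite_eval: assumes "finite I" "finite A" shows "finite (eval A I)"
proof -
  let ?T = "(\<Union>t\<in>I. {pos 1 t, pos 2 t, pos 3 t})"
  have "eval A I \<subseteq> {m. dom m = vars A \<and> ran m \<subseteq> ?T}"
  proof
    fix m assume m: "m \<in> eval A I"
    have "d \<in> ?T" if "m x = Some d" for x d
    proof -
      from that m have "x \<in> vars A" by (auto simp: eval_def)
      then obtain tA i where tA: "tA \<in> A" "i \<in> {1,2,3}" "pos i tA = V x" by (rule vars_E)
      from m tA(1) have "app_tp m tA \<in> I" by (auto simp: eval_def app_gp_def)
      moreover have "pos i (app_tp m tA) = d" using tA(3) that by simp
      ultimately show ?thesis using tA(2) by blast
    qed
    then show "m \<in> {m. dom m = vars A \<and> ran m \<subseteq> ?T}"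
      using m by (auto simp: eval_def ran_def)
  qed
  moreover have "finite {m. dom m = vars A \<and> ran m \<subseteq> ?T}"
    by (rule finite_set_of_finite_maps) (use assms finite_vars in auto)
  ultimately show ?thesis by (rule finite_subset)
qed

lemma rule_app_mono: "I \<subseteq> J \<Longrightarrow> rule_app A C I \<subseteq> rule_app A C J"
  unfolding rule_app_def eval_def by blast

lemma rule_app_graph: assumes "is_graph I" "finite A" shows "is_graph (rule_app A C I)"
proof -
  let ?F = "{app_gp m C |m. m \<in> eval A I \<and> is_graph (app_gp m C)}"
  have f: "finite (eval A I)" using assms finite_eval unfolding is_graph_def by blast
  have "?F \<subseteq> (\<lambda>m. app_gp m C) ` eval A I"
    by blast
  then have fF: "finite ?F"
    using f finite_subset by blast
  have gF: "is_graph X" if "X \<in> ?F" for X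
  proof -
    from that obtain m where "X = app_gp m C" "is_graph (app_gp m C)" by blast
    then show ?thesis by simp
  qed
  have "finite (\<Union>?F)"
  proof (rule finite_Union[OF fF])
    fix X assume "X \<in> ?F"
    from gF[OF this] show "finite X" unfolding is_graph_def by blast
  qed
  moreover have "is_triple t" if "t \<in> \<Union>?F" for t
  proof -
    from that obtain X where "X \<in> ?F" "t \<in> X" by (rule UnionE)
    then show ?thesis using gF unfolding is_graph_def by blast
  qed
  moreover have "finite I" "\<forall>t\<in>I. is_triple t" using assms(1) unfolding is_graph_def by blast+
  ultimately show ?thesis unfolding rule_app_def is_graph_def by blast
qed


locale setting =
  fixes S :: "('u,'l,'v) schema" and A C :: "('u,'l,'v) tp set"
    and lam :: 'u and fr :: "('u,'l,'v) mp \<Rightarrow> 'v \<Rightarrow> 'v"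
  assumes sok: "schema_ok S" and rok: "rule_ok A C" and fok: "fresh_choice lam fr S A C"
begin

abbreviation "SG \<equiv> fst S"
abbreviation "SD \<equiv> snd S"
abbreviation "K \<equiv> kept lam S A C"
abbreviation "Dm \<equiv> Delta_m lam S A C"
abbreviation "SB \<equiv> sb_eval lam A (fst S)"

definition "G' = fst S \<union> (\<Union>m\<in>K. smt lam fr m ` C)"
definition "D' = snd S \<union> ((\<Union>m\<in>K. {w. \<exists>v\<in>Dm m. sm_tm lam fr m (V v) = V w}) \<inter> vars G')"

lemma score_eq: "score lam fr S A C = (G', D')"
  unfolding score_def Let_def G'_def D'_def sm_gp_eq by simp

lemma finA: "finite A" and finC: "finite C" and finS: "finite SG"
  using rok sok unfolding rule_ok_def schema_ok_def is_gpat_def by blast+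

lemma tpatA: "t \<in> A \<Longrightarrow> \<not> is_lit (pos 1 t) \<and> \<not> is_lit (pos 2 t)"
  using rok unfolding rule_ok_def is_gpat_def is_tpat_def by blast
lemma tpatC: "t \<in> C \<Longrightarrow> \<not> is_lit (pos 1 t) \<and> \<not> is_lit (pos 2 t)"
  using rok unfolding rule_ok_def is_gpat_def is_tpat_def by blast
lemma varsCA: "vars C \<subseteq> vars A"
  using rok unfolding rule_ok_def by blast
lemma linS: "linear SG"
  using sok unfolding schema_ok_def by blast
lemma DS: "SD \<subseteq> vars SG"
  using sok unfolding schema_ok_def by blast
lemma lamS: "lam \<notin> uris SG"
  using fok unfolding fresh_choice_def by blast

lemma fr_inj: assumes "m \<in> SB" "m v = Some (U lam)" "m' \<in> SB" "m' v' = Some (U lam)"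
   "fr m v = fr m' v'" shows "m = m' \<and> v = v'"
proof -
  have "inj_on (\<lambda>(m,v). fr m v) {(m,v). m \<in> SB \<and> m v = Some (U lam)}"
    using fok unfolding fresh_choice_def Let_def by blast
  from inj_onD[OF this, of "(m,v)" "(m',v')"] assms show ?thesis by simp
qed

lemma fr_fresh: assumes "m \<in> SB" "m v = Some (U lam)" shows "fr m v \<notin> vars SG"
proof -
  have "\<forall>(m,v)\<in>{(m,v). m \<in> SB \<and> m v = Some (U lam)}. fr m v \<notin> vars SG \<union> vars A \<union> vars C"
    using fok unfolding fresh_choice_def Let_def by blast
  from bspec[OF this, of "(m,v)"] assms show ?thesis by simp
qed

lemma K_SB: "m \<in> K \<Longrightarrow> m \<in> SB"
  unfolding kept_def by blast

lemma SB_dom: "m \<in> SB \<Longrightarrow> dom m = vars A"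
  unfolding sb_eval_def by blast
lemma SB_wf: "m \<in> SB \<Longrightarrow> wf_map m"
  unfolding sb_eval_def by blast

lemma Delta_vars: assumes "v \<in> Dm m" shows "v \<in> vars A"
proof -
  from assms consider (a) t i where "t \<in> A \<union> C" "pos i t = V v"
    | (b) tA where "tA \<in> A" "pos 3 tA = V v"
    unfolding Delta_m_def by blast
  then show ?thesis
  proof cases
    case a
    show ?thesis
    proof (cases "t \<in> A")
      case True
      show ?thesis using vars_I[OF True a(2)] .
    next
      case False
      then have "t \<in> C" using a(1) by simp
      from vars_I[OF this a(2)] varsCA show ?thesis by (rule subsetD[rotated])
    qed
  next
    case b
    show ?thesis using vars_I[OF b] .
  qed
qed

lemma D'_E: assumes "w \<in> D'"
  shows "w \<in> SD \<or> (\<exists>m\<in>K. \<exists>v\<in>Dm m. m v = Some (U lam) \<and> w = fr m v)"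
proof (cases "w \<in> SD")
  case False
  with assms obtain m v where m: "m \<in> K" "v \<in> Dm m" "sm_tm lam fr m (V v) = V w"
    unfolding D'_def by blast
  have "v \<in> dom m" using Delta_vars[OF m(2)] SB_dom[OF K_SB[OF m(1)]] by simp
  then obtain d where d: "m v = Some d" by blast
  have "\<not> is_var d" using wf_map_D[OF SB_wf[OF K_SB[OF m(1)]] d] .
  then have "d = U lam \<and> w = fr m v" using m(3) d by (cases "d = U lam") auto
  then show ?thesis using m d by blast
qed simp

lemma D'_I: assumes "m \<in> K" "v \<in> Dm m" "m v = Some (U lam)" "fr m v \<in> vars G'"
  shows "fr m v \<in> D'"
proof -
  have "sm_tm lam fr m (V v) = V (fr m v)" using assms(3) by simp
  then show ?thesis using assms unfolding D'_def by blast
qed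

lemma SD_D': "SD \<subseteq> D'"
  unfolding D'_def by blast

lemma sound_new:
  assumes t: "is_triple t" and mK: "m \<in> K" and cC: "c \<in> C"
    and wfmu: "wf_map \<mu>" and mut: "app_tp \<mu> (smt lam fr m c) = t"
    and muD: "\<forall>v\<in>D'. \<forall>l. \<mu> v \<noteq> Some (L l)"
  shows "\<exists>J\<in>instances S. t \<in> rule_app A C J"
proof -
  have mSB: "m \<in> SB" using K_SB[OF mK] .
  have domm: "dom m = vars A" using SB_dom[OF mSB] .
  have wfm: "wf_map m" using SB_wf[OF mSB] .
  have nd: "\<not> discarded lam S A C m" using mK unfolding kept_def by blast
  have mv: "\<exists>d. m x = Some d \<and> \<not> is_var d" if "x \<in> vars A" for x
  proof -
    have "x \<in> dom m" using that domm by simp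
    then obtain d where "m x = Some d" by (auto simp only: dom_def mem_Collect_eq)
    then show ?thesis using wf_map_D[OF wfm] by blast
  qed
  have smtG: "smt lam fr m c \<in> G'" using mK cC unfolding G'_def by blast
  have pt0: "pos i t = app_tm \<mu> (sm_tm lam fr m (pos i c))" for i
    using mut by (metis pos_app_tp pos_smt)
  define val where "val x = (if m x = Some (U lam) then (if x \<in> vars_tp c then the (\<mu> (fr m x)) else U lam) else the (m x))" for x
  define m' where "m' x = (if x \<in> vars A then Some (val x) else None)" for x
  have m'x: "m' x = Some (val x)" if "x \<in> vars A" for x using that by (simp add: m'_def)
  have posc: "app_tm m' (pos i c) = pos i t" for i
  proof (cases "pos i c")
    case (V x)
    have xA: "x \<in> vars A" using subsetD[OF varsCA vars_I[OF cC V]] .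
    obtain d where d: "m x = Some d" "\<not> is_var d" using mv[OF xA] by blast
    have pt: "pos i t = app_tm \<mu> (sm_tm lam fr m (V x))" using pt0[of i] V by simp
    show ?thesis
    proof (cases "d = U lam")
      case True
      have xc: "x \<in> vars_tp c" using vars_tp_I[OF V] .
      have pt2: "app_tm \<mu> (V (fr m x)) = pos i t" using pt d True by simp
      have "\<not> is_var (pos i t)" using triple_nonvar[OF t] .
      then have "\<mu> (fr m x) = Some (pos i t)" using app_tm_var_nonvar[OF pt2] by blast
      then show ?thesis using V d True xA xc by (simp add: m'_def val_def)
    next
      case False
      have "pos i t = d" using pt d False app_tm_nonvar[OF d(2)] by simp
      then show ?thesis using V d False xA by (simp add: m'_def val_def)
    qed
  next
    case (U u) show ?thesis using pt0[of i] unfolding U by (metis app_tm.simps sm_tm.simps)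
  next
    case (L u) show ?thesis using pt0[of i] unfolding L by (metis app_tm.simps sm_tm.simps)
  qed
  have eqc: "app_tp m' c = t" by (rule app_tp_eqI[OF posc])
  have valnv: "\<not> is_var (val x)" if xA: "x \<in> vars A" for x
  proof (cases "m x = Some (U lam) \<and> x \<in> vars_tp c")
    case True
    then have "x \<in> vars_tp c" by simp
    then obtain i where "i \<in> {1,2,3}" and i: "pos i c = V x" by (rule vars_tp_E)
    have "val x = pos i t" using posc[of i] i m'x[OF xA] by simp
    then show ?thesis using triple_nonvar[OF t] by simp
  next
    case False
    obtain d where d: "m x = Some d" "\<not> is_var d" using mv[OF xA] by blast
    show ?thesis
    proof (cases "d = U lam")
      case True
      then show ?thesis using False d by (simp add: val_def)
    next
      case False
      then show ?thesis using d by (simp add: val_def)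
    qed
  qed
  have domm': "dom m' = vars A" unfolding m'_def dom_def by simp
  have wfm': "wf_map m'"
    unfolding wf_map_def
  proof
    fix d assume "d \<in> ran m'"
    then obtain x where "m' x = Some d" unfolding ran_def by blast
    then have "x \<in> vars A" "d = val x" unfolding m'_def by (simp_all split: if_splits)
    then show "\<not> is_var d" using valnv by simp
  qed
  have Dm_uri: "\<exists>u. val x = U u" if xD: "x \<in> Dm m" for x
  proof -
    have xA: "x \<in> vars A" using Delta_vars[OF xD] .
    obtain d where d: "m x = Some d" "\<not> is_var d" using mv[OF xA] by blast
    show ?thesis
    proof (cases "d = U lam")
      case dl: True
      show ?thesis
      proof (cases "x \<in> vars_tp c")
        case xc: True
        then obtain i where "i \<in> {1,2,3}" and i: "pos i c = V x" by (rule vars_tp_E)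
        have "pos i (smt lam fr m c) = V (fr m x)" using i d dl by simp
        then have "fr m x \<in> vars G'" using vars_I[OF smtG] by blast
        then have inD: "fr m x \<in> D'" using D'_I[OF mK xD] d dl by simp
        have vx: "val x = pos i t" using posc[of i] i m'x[OF xA] by simp
        have pt2: "app_tm \<mu> (V (fr m x)) = pos i t" using pt0[of i] i d dl by simp
        have nvt: "\<not> is_var (pos i t)" using triple_nonvar[OF t] .
        then have "\<mu> (fr m x) = Some (pos i t)" using app_tm_var_nonvar[OF pt2] by blast
        then have "\<forall>l. pos i t \<noteq> L l" using muD inD by metis
        then show ?thesis using uri_cases nvt vx by metis
      next
        case False
        then show ?thesis using d dl by (simp add: val_def)
      qed
    next
      case False
      then have vx: "val x = d" using d by (simp add: val_def)
      have "\<forall>l. d \<noteq> L l" using nd xD d unfolding discarded_def by blast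
      then show ?thesis using uri_cases d(2) vx by metis
    qed
  qed
  have nv: "\<not> is_var (app_tm m' (pos i t'))" if t': "t' \<in> A \<union> C" for i t'
  proof (cases "pos i t'")
    case (V x)
    have "x \<in> vars A"
    proof (cases "t' \<in> A")
      case True show ?thesis using vars_I[OF True V] .
    next
      case False then have tC: "t' \<in> C" using t' by simp
      show ?thesis using subsetD[OF varsCA vars_I[OF tC V]] .
    qed
    then show ?thesis using V m'x valnv by simp
  qed simp_all
  have uri12: "\<exists>u. app_tm m' (pos i t') = U u" if t': "t' \<in> A \<union> C" and i: "i \<in> {1,2}" for i t'
  proof -
    have nl: "\<not> is_lit (pos i t')"
      using tpatA tpatC t' i by blast
    show ?thesis
    proof (cases "pos i t'")
      case (V x)
      have "x \<in> Dm m" unfolding Delta_m_def using t' i V by blast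
      then show ?thesis using V m'x[OF Delta_vars] Dm_uri by simp
    next
      case (L l) then show ?thesis using nl by simp
    qed simp
  qed
  have trip: "is_triple (app_tp m' t')" if t': "t' \<in> A \<union> C" for t'
    unfolding is_triple_iff using uri12[OF t', of 1] uri12[OF t', of 2] nv[OF t', of 3] by simp
  have mT: "\<exists>tS\<in>SG. models SD tS (app_tp m' tA)" if tA: "tA \<in> A" for tA
  proof -
    have tAC: "tA \<in> A \<union> C" using tA by simp
    obtain tS where tST: "tS \<in> Tset lam S m tA"
      and pr3: "\<forall>l. app_tm m' (pos 3 tA) = L l \<longrightarrow> pos 3 tS = L l \<or> (\<exists>w. pos 3 tS = V w \<and> w \<in> open_vars S)"
    proof (cases "\<exists>l. app_tm m' (pos 3 tA) = L l")
      case True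
      then obtain l where l: "app_tm m' (pos 3 tA) = L l" by blast
      have ndA: "\<not> cond_a lam S m tA" using nd tA unfolding discarded_def by blast
      have "\<exists>tS\<in>Tset lam S m tA. pos 3 tS = L l \<or> (\<exists>w. pos 3 tS = V w \<and> w \<in> open_vars S)"
      proof (cases "pos 3 tA")
        case (L l')
        then have ll: "l' = l" using l by simp
        show ?thesis using ndA L ll unfolding cond_a_def by blast
      next
        case (V x)
        have xA: "x \<in> vars A" using vars_I[OF tA V] .
        have vx: "val x = L l" using l V m'x[OF xA] by simp
        obtain d where d: "m x = Some d" "\<not> is_var d" using mv[OF xA] by blast
        show ?thesis
        proof (cases "d = U lam")
          case False
          then have dl: "d = L l" using vx d by (simp add: val_def)
          show ?thesis using ndA V d dl unfolding cond_a_def by blast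
        next
          case True
          have "x \<notin> Dm m"
          proof
            assume "x \<in> Dm m"
            from Dm_uri[OF this] vx show False by auto
          qed
          then have ncb: "\<not> cond_b lam S m tA" using tA V unfolding Delta_m_def by blast
          show ?thesis using ncb V d True unfolding cond_b_def by blast
        qed
      next
        case (U u) then show ?thesis using l by simp
      qed
      then obtain tS where "tS \<in> Tset lam S m tA" "pos 3 tS = L l \<or> (\<exists>w. pos 3 tS = V w \<and> w \<in> open_vars S)"
        by blast
      moreover have "\<forall>l'. app_tm m' (pos 3 tA) = L l' \<longrightarrow> l' = l" using l by simp
      ultimately show ?thesis using that by metis
    next
      case False
      obtain q where q: "q \<in> Qrw lam A" "app_gp m q \<subseteq> sandbox lam SG"
        using mSB unfolding sb_eval_def by blast
      then obtain f where f: "q = f ` A" "\<forall>t\<in>A. f t \<in> rewritings lam t"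
        unfolding Qrw_def by blast
      have "app_tp m (f tA) \<in> sbt lam ` SG"
        using q(2) f(1) tA unfolding app_gp_def sandbox_eq by blast
      then obtain tS0 where tS0: "tS0 \<in> SG" "app_tp m (f tA) = sbt lam tS0" by blast
      have "models SD tS0 (app_tp m (f tA))" using tS0(2) models_sbt by metis
      moreover have "app_tp m (f tA) \<in> sandbox lam SG" using tS0 unfolding sandbox_eq by simp
      moreover have "f tA \<in> rewritings lam tA" using f(2) tA by blast
      ultimately have "tS0 \<in> Tset lam S m tA" using tS0(1) unfolding Tset_def by blast
      then show ?thesis using that False by blast
    qed
    from tST obtain tq \<mu>0 where tS: "tS \<in> SG" "tq \<in> rewritings lam tA" "wf_map \<mu>0"
      "app_tp \<mu>0 tS = app_tp m tq" "\<forall>v\<in>SD. \<forall>l. \<mu>0 v \<noteq> Some (L l)"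
      unfolding Tset_def models_def by blast
    have tsc: "app_tm m' (pos i tA) = pos i tS" if nvi: "\<not> is_var (pos i tS)" and i: "i \<in> {1,2,3}" for i
    proof -
      have "pos i (app_tp \<mu>0 tS) = pos i (app_tp m tq)" using tS(4) by simp
      then have e1: "pos i tS = app_tm m (pos i tq)" using app_tm_nonvar[OF nvi, of \<mu>0] by simp
      have nl: "pos i tS \<noteq> U lam" using uris_lam[OF tS(1) lamS] .
      have "pos i tq \<in> {pos i tA, U lam}" using tS(2) i unfolding rewritings_def by blast
      then have "pos i tq = pos i tA" using e1 nl by auto
      then have e2: "app_tm m (pos i tA) = pos i tS" using e1 by simp
      show ?thesis
      proof (cases "pos i tA")
        case (V x)
        have xA: "x \<in> vars A" using vars_I[OF tA V] .
        have "m x = Some (pos i tS)" using app_tm_var_nonvar[of m x "pos i tS"] e2 V nvi by simp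
        then show ?thesis using V m'x[OF xA] nl by (simp add: val_def)
      next
        case (U u) show ?thesis using e2 unfolding U by (metis app_tm.simps)
      next
        case (L u) show ?thesis using e2 unfolding L by (metis app_tm.simps)
      qed
    qed
    have nvA: "\<not> is_var (app_tm m' (pos i tA))" for i using nv[OF tAC] .
    have linT: "i = j" if "is_var (pos i tS)" "pos i tS = pos j tS" "i \<in> {1,2,3}" "j \<in> {1,2,3}" for i j
      using linS tS(1) that unfolding linear_def by blast
    define \<mu>1 where "\<mu>1 w = (if pos 1 tS = V w then Some (app_tm m' (pos 1 tA))
       else if pos 2 tS = V w then Some (app_tm m' (pos 2 tA))
       else if pos 3 tS = V w then Some (app_tm m' (pos 3 tA)) else None)" for w
    have mu1: "\<mu>1 w = Some (app_tm m' (pos i tA))" if pw: "pos i tS = V w" and i: "i \<in> {1,2,3}" for i w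
    proof -
      have iv: "is_var (pos i tS)" using pw by simp
      have n1: "pos 1 tS \<noteq> V w" if "i \<noteq> 1"
      proof
        assume "pos 1 tS = V w"
        then have "1 = i" using linT[of 1 i] pw i by simp
        then show False using that by simp
      qed
      have n2: "pos 2 tS \<noteq> V w" if "i \<noteq> 2"
      proof
        assume "pos 2 tS = V w"
        then have "2 = i" using linT[of 2 i] pw i by simp
        then show False using that by simp
      qed
      consider "i = 1" | "i = 2" | "i = 3" using i by blast
      then show ?thesis
      proof cases
        case 1 then show ?thesis using pw by (simp add: \<mu>1_def)
      next
        case 2 then show ?thesis using pw n1 by (simp add: \<mu>1_def)
      next
        case 3 then show ?thesis using pw n1 n2 by (simp add: \<mu>1_def)
      qed
    qed
    have wfmu1: "wf_map \<mu>1"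
      unfolding wf_map_def
    proof
      fix d assume "d \<in> ran \<mu>1"
      then obtain w where w: "\<mu>1 w = Some d" unfolding ran_def by blast
      then have "d = app_tm m' (pos 1 tA) \<or> d = app_tm m' (pos 2 tA) \<or> d = app_tm m' (pos 3 tA)"
        unfolding \<mu>1_def by (simp split: if_splits)
      then show "\<not> is_var d" using nvA by metis
    qed
    have eqpos: "app_tm \<mu>1 (pos i tS) = app_tm m' (pos i tA)" if i: "i \<in> {1,2,3}" for i
    proof (cases "is_var (pos i tS)")
      case True
      then obtain w where w: "pos i tS = V w" by (cases "pos i tS") auto
      show ?thesis using mu1[OF w i] w by simp
    next
      case False
      show ?thesis using tsc[OF False i] app_tm_nonvar[OF False] by simp
    qed
    have eqA: "app_tp \<mu>1 tS = app_tp m' tA"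
      by (rule tp_ext) (simp_all only: pos_app_tp eqpos insert_iff simp_thms)
    have tr: "is_triple (app_tp m' tA)" using trip[OF tAC] .
    have Dok: "\<forall>v\<in>SD. \<forall>l. \<mu>1 v \<noteq> Some (L l)"
    proof (intro ballI allI notI)
      fix w l assume wS: "w \<in> SD" and w: "\<mu>1 w = Some (L l)"
      from w consider (p1) "pos 1 tS = V w" "app_tm m' (pos 1 tA) = L l"
        | (p2) "pos 2 tS = V w" "app_tm m' (pos 2 tA) = L l"
        | (p3) "pos 3 tS = V w" "app_tm m' (pos 3 tA) = L l"
        unfolding \<mu>1_def by (simp split: if_splits)
      then show False
      proof cases
        case p1
        then show False using triple_uri1[OF tr] by simp
      next
        case p2
        then show False using triple_uri2[OF tr] by simp
      next
        case p3
        then have "pos 3 tS = L l \<or> (\<exists>w. pos 3 tS = V w \<and> w \<in> open_vars S)" using pr3 by blast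
        then show False using p3 wS unfolding open_vars_def by auto
      qed
    qed
    show ?thesis using tS(1) wfmu1 eqA Dok unfolding models_def by blast
  qed
  define J where "J = app_gp m' A"
  have Jg: "is_graph J"
    unfolding is_graph_def J_def app_gp_def using finA trip by blast
  have Jinst: "J \<in> instances S"
    unfolding instances_def using Jg mT unfolding J_def app_gp_def by blast
  have evJ: "m' \<in> eval A J" unfolding eval_def J_def using domm' wfm' by blast
  have gC: "is_graph (app_gp m' C)"
    unfolding is_graph_def app_gp_def using finC trip by blast
  have "t \<in> app_gp m' C" using eqc cC unfolding app_gp_def by blast
  then have "t \<in> rule_app A C J" using evJ gC unfolding rule_app_def by blast
  then show ?thesis using Jinst by blast
qed

lemma compl_new:
  assumes II: "I \<in> instances S" and mE: "m \<in> eval A I" and gC: "is_graph (app_gp m C)" and cC: "c \<in> C"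
  shows "\<exists>tS\<in>G'. models D' tS (app_tp m c)"
proof -
  have domm: "dom m = vars A" and wfm: "wf_map m" and mI: "app_gp m A \<subseteq> I"
    using mE unfolding eval_def by blast+
  have mv: "\<exists>d. m x = Some d \<and> \<not> is_var d" if "x \<in> vars A" for x
  proof -
    have "x \<in> dom m" using that domm by simp
    then obtain d where "m x = Some d" by (auto simp only: dom_def mem_Collect_eq)
    then show ?thesis using wf_map_D[OF wfm] by blast
  qed
  have gI: "is_graph I" using II unfolding instances_def by blast
  have ex: "\<forall>tA\<in>A. \<exists>tS\<in>SG. models SD tS (app_tp m tA)"
  proof
    fix tA assume "tA \<in> A"
    then have "app_tp m tA \<in> I" using mI unfolding app_gp_def by blast
    then show "\<exists>tS\<in>SG. models SD tS (app_tp m tA)" using II unfolding instances_def by blast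
  qed
  then obtain g where g: "\<forall>tA\<in>A. g tA \<in> SG \<and> models SD (g tA) (app_tp m tA)"
    by metis
  define K0 where "K0 x = (\<exists>tA\<in>A. \<exists>i. pos i tA = V x \<and> \<not> is_var (pos i (g tA)))" for x
  define m0 where "m0 x = (if x \<in> vars A then Some (if K0 x then the (m x) else U lam) else None)" for x
  define rw where "rw tA i = (if is_var (pos i (g tA)) then U lam else pos i tA)" for tA and i :: nat
  define f where "f tA = (rw tA 1, rw tA 2, rw tA 3)" for tA
  have F0: "app_tm m (pos i tA) = pos i (g tA)" if tA: "tA \<in> A" and nvi: "\<not> is_var (pos i (g tA))" for tA i
  proof -
    obtain \<mu> where "app_tp \<mu> (g tA) = app_tp m tA" using g tA unfolding models_def by blast
    then have "pos i (app_tp \<mu> (g tA)) = pos i (app_tp m tA)" by simp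
    then show ?thesis using app_tm_nonvar[OF nvi, of \<mu>] by simp
  qed
  have F0': "m0 x = Some (pos i (g tA))" if tA: "tA \<in> A" and px: "pos i tA = V x" and nvi: "\<not> is_var (pos i (g tA))" for tA i x
  proof -
    have xA: "x \<in> vars A" using vars_I[OF tA px] .
    have k: "K0 x" unfolding K0_def using tA px nvi by blast
    have "app_tm m (V x) = pos i (g tA)" using F0[OF tA nvi] px by simp
    from app_tm_var_nonvar[OF this nvi] have "m x = Some (pos i (g tA))" .
    then show ?thesis using xA k by (simp add: m0_def)
  qed
  have F1: "app_tm m0 (rw tA i) = sb_tm lam (pos i (g tA))" if tA: "tA \<in> A" for tA i
  proof (cases "is_var (pos i (g tA))")
    case True
    then obtain w where "pos i (g tA) = V w" by (cases "pos i (g tA)") auto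
    then show ?thesis using True by (simp add: rw_def)
  next
    case False
    have r: "rw tA i = pos i tA" using False by (simp add: rw_def)
    show ?thesis
    proof (cases "pos i tA")
      case (V x)
      show ?thesis using F0'[OF tA V False] r V sb_tm_nonvar[OF False] by simp
    next
      case (U u)
      show ?thesis using F0[OF tA False] r sb_tm_nonvar[OF False] unfolding U by (metis app_tm.simps)
    next
      case (L u)
      show ?thesis using F0[OF tA False] r sb_tm_nonvar[OF False] unfolding L by (metis app_tm.simps)
    qed
  qed
  have F1': "app_tp m0 (f tA) = sbt lam (g tA)" if tA: "tA \<in> A" for tA
    by (rule tp_ext) (simp_all add: f_def F1[OF tA])
  have frw: "f tA \<in> rewritings lam tA" for tA
    unfolding rewritings_def f_def rw_def by simp
  have domm0: "dom m0 = vars A" unfolding m0_def dom_def by simp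
  have wfm0: "wf_map m0"
    unfolding wf_map_def
  proof
    fix d assume "d \<in> ran m0"
    then obtain x where x: "m0 x = Some d" unfolding ran_def by blast
    then have xA: "x \<in> vars A" unfolding m0_def by (simp split: if_splits)
    obtain e where e: "m x = Some e" "\<not> is_var e" using mv[OF xA] by blast
    have "d = e \<or> d = U lam" using x e xA unfolding m0_def by (simp split: if_splits)
    then show "\<not> is_var d" using e by auto
  qed
  have m0SB: "m0 \<in> SB"
  proof -
    have "f ` A \<in> Qrw lam A" unfolding Qrw_def using frw by blast
    moreover have "app_gp m0 (f ` A) \<subseteq> sandbox lam SG"
    proof
      fix x assume "x \<in> app_gp m0 (f ` A)"
      then obtain tA where tA: "tA \<in> A" "x = app_tp m0 (f tA)" unfolding app_gp_def by blast
      then have "x = sbt lam (g tA)" using F1' by simp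
      then show "x \<in> sandbox lam SG" using g tA(1) unfolding sandbox_eq by blast
    qed
    ultimately show ?thesis unfolding sb_eval_def using domm0 wfm0 by blast
  qed
  have gT: "g tA \<in> Tset lam S m0 tA" if tA: "tA \<in> A" for tA
  proof -
    have "models SD (g tA) (app_tp m0 (f tA))" using F1'[OF tA] models_sbt by metis
    moreover have "app_tp m0 (f tA) \<in> sandbox lam SG" using F1'[OF tA] g tA unfolding sandbox_eq by simp
    ultimately show ?thesis using g tA frw unfolding Tset_def by blast
  qed
  have obj_lit: "pos 3 (g tA) = L l \<or> (\<exists>w. pos 3 (g tA) = V w \<and> w \<in> open_vars S)"
    if tA: "tA \<in> A" and ml: "app_tm m (pos 3 tA) = L l" for tA l
  proof -
    obtain \<mu> where mu: "app_tp \<mu> (g tA) = app_tp m tA" "\<forall>v\<in>SD. \<forall>l. \<mu> v \<noteq> Some (L l)"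
      using g tA unfolding models_def by blast
    have e: "app_tm \<mu> (pos 3 (g tA)) = L l"
      using ml arg_cong[OF mu(1), of "pos 3"] by simp
    show ?thesis
    proof (cases "pos 3 (g tA)")
      case (V w)
      then have "\<mu> w = Some (L l)" using e app_tm_var_nonvar by fastforce
      then have "w \<notin> SD" using mu(2) by blast
      moreover have "w \<in> vars SG" using vars_I[OF _ V] g tA by blast
      ultimately show ?thesis using V unfolding open_vars_def by blast
    next
      case (U u) then show ?thesis using e by simp
    next
      case (L u) then show ?thesis using e by simp
    qed
  qed
  have nolit: "\<forall>l. m x \<noteq> Some (L l)" if xD: "x \<in> Dm m0" for x
  proof (intro allI notI)
    fix l assume mx: "m x = Some (L l)"
    from xD consider (a) t i where "t \<in> A \<union> C" "i \<in> {1,2}" "pos i t = V x"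
      | (b) tA where "tA \<in> A" "pos 3 tA = V x" "cond_b lam S m0 tA"
      unfolding Delta_m_def by blast
    then show False
    proof cases
      case a
      have "is_triple (app_tp m t)"
      proof (cases "t \<in> A")
        case True
        then have "app_tp m t \<in> I" using mI unfolding app_gp_def by blast
        then show ?thesis using gI unfolding is_graph_def by blast
      next
        case False
        then have "t \<in> C" using a(1) by simp
        then have "app_tp m t \<in> app_gp m C" unfolding app_gp_def by blast
        then show ?thesis using gC unfolding is_graph_def by blast
      qed
      then have "\<exists>u. pos i (app_tp m t) = U u" using a(2) triple_uri1 triple_uri2 by blast
      then show False using a(3) mx by simp
    next
      case b
      have "app_tm m (pos 3 tA) = L l" using b(2) mx by simp
      from obj_lit[OF b(1) this] have ol: "pos 3 (g tA) = L l \<or> (\<exists>w. pos 3 (g tA) = V w \<and> w \<in> open_vars S)" .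
      have m0x: "m0 x = Some (U lam)" using b(3) b(2) unfolding cond_b_def by simp
      have nK: "\<not> K0 x"
      proof
        assume "K0 x"
        then have "m0 x = Some (the (m x))" using vars_I[OF b(1) b(2)] by (simp add: m0_def)
        then show False using m0x mx by simp
      qed
      have "is_var (pos 3 (g tA))" using nK b(1) b(2) unfolding K0_def by blast
      then obtain w where w: "pos 3 (g tA) = V w" "w \<in> open_vars S" using ol by auto
      then show False using b(3) gT[OF b(1)] unfolding cond_b_def by blast
    qed
  qed
  have nd: "\<not> discarded lam S A C m0"
  proof -
    have "\<not> cond_a lam S m0 tA" if tA: "tA \<in> A" for tA
    proof
      assume ca: "cond_a lam S m0 tA"
      then obtain l where l: "pos 3 tA = L l \<or> (\<exists>v. pos 3 tA = V v \<and> m0 v = Some (L l))"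
        and no: "\<not> (\<exists>tS\<in>Tset lam S m0 tA. pos 3 tS = L l \<or> (\<exists>w. pos 3 tS = V w \<and> w \<in> open_vars S))"
        unfolding cond_a_def by blast
      have "app_tm m (pos 3 tA) = L l"
      proof (cases "pos 3 tA = L l")
        case True then show ?thesis by simp
      next
        case False
        then obtain v where v: "pos 3 tA = V v" "m0 v = Some (L l)" using l by blast
        have vA: "v \<in> vars A" using vars_I[OF tA v(1)] .
        have "K0 v" using v(2) vA by (simp add: m0_def split: if_splits)
        then have "the (m v) = L l" using v(2) vA by (simp add: m0_def)
        moreover obtain e where "m v = Some e" using mv[OF vA] by blast
        ultimately show ?thesis using v(1) by simp
      qed
      from obj_lit[OF tA this] show False using no gT[OF tA] by blast
    qed
    moreover have "\<not> (\<exists>v\<in>Dm m0. \<exists>l. m0 v = Some (L l))"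
    proof
      assume "\<exists>v\<in>Dm m0. \<exists>l. m0 v = Some (L l)"
      then obtain v l where v: "v \<in> Dm m0" "m0 v = Some (L l)" by blast
      have vA: "v \<in> vars A" using Delta_vars[OF v(1)] .
      have "K0 v" using v(2) vA by (simp add: m0_def split: if_splits)
      then have "the (m v) = L l" using v(2) vA by (simp add: m0_def)
      moreover obtain e where "m v = Some e" using mv[OF vA] by blast
      ultimately show False using nolit[OF v(1)] by simp
    qed
    ultimately show ?thesis unfolding discarded_def by blast
  qed
  have m0K: "m0 \<in> K" unfolding kept_def using m0SB nd by blast
  have frinj: "x = y" if "m0 x = Some (U lam)" "m0 y = Some (U lam)" "fr m0 x = fr m0 y" for x y
    using fr_inj[OF m0SB that(1) m0SB that(2) that(3)] by blast
  define \<mu>' where "\<mu>' w = (if \<exists>x. m0 x = Some (U lam) \<and> fr m0 x = w then m (THE x. m0 x = Some (U lam) \<and> fr m0 x = w) else None)" for w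
  have mu'fr: "\<mu>' (fr m0 x) = m x" if "m0 x = Some (U lam)" for x
  proof -
    have "(THE y. m0 y = Some (U lam) \<and> fr m0 y = fr m0 x) = x"
      using that frinj by blast
    then show ?thesis using that unfolding \<mu>'_def by auto
  qed
  have mu'E: "\<exists>x. m0 x = Some (U lam) \<and> w = fr m0 x \<and> \<mu>' w = m x" if "\<mu>' w \<noteq> None" for w
  proof -
    from that obtain x where "m0 x = Some (U lam)" "fr m0 x = w" unfolding \<mu>'_def by (auto split: if_splits)
    then show ?thesis using mu'fr by blast
  qed
  have wfmu': "wf_map \<mu>'"
    unfolding wf_map_def
  proof
    fix d assume "d \<in> ran \<mu>'"
    then obtain w where w: "\<mu>' w = Some d" unfolding ran_def by blast
    then obtain x where "\<mu>' w = m x" using mu'E by blast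
    then show "\<not> is_var d" using w wf_map_D[OF wfm] by simp
  qed
  have eqp: "app_tm \<mu>' (sm_tm lam fr m0 (pos i c)) = app_tm m (pos i c)" for i
  proof (cases "pos i c")
    case (V x)
    have xA: "x \<in> vars A" using subsetD[OF varsCA vars_I[OF cC V]] .
    obtain e where e: "m x = Some e" "\<not> is_var e" using mv[OF xA] by blast
    show ?thesis
    proof (cases "K0 x")
      case False
      then have m0x: "m0 x = Some (U lam)" using xA by (simp add: m0_def)
      show ?thesis using V m0x mu'fr[OF m0x] e by simp
    next
      case True
      then have m0x: "m0 x = Some e" using xA e by (simp add: m0_def)
      show ?thesis
      proof (cases "e = U lam")
        case True
        show ?thesis using V m0x True mu'fr m0x e by simp
      next
        case False
        show ?thesis using V m0x False e app_tm_nonvar[OF e(2)] by simp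
      qed
    qed
  next
    case (U u) show ?thesis unfolding U by simp
  next
    case (L u) show ?thesis unfolding L by simp
  qed
  have eqt: "app_tp \<mu>' (smt lam fr m0 c) = app_tp m c"
    by (rule tp_ext) (simp_all only: pos_app_tp pos_smt eqp)
  have Dok: "\<forall>v\<in>D'. \<forall>l. \<mu>' v \<noteq> Some (L l)"
  proof (intro ballI allI notI)
    fix w l assume wD: "w \<in> D'" and w: "\<mu>' w = Some (L l)"
    then obtain x where x: "m0 x = Some (U lam)" "w = fr m0 x" "\<mu>' w = m x" using mu'E by blast
    from D'_E[OF wD] show False
    proof
      assume "w \<in> SD"
      then have "w \<in> vars SG" using DS by blast
      then show False using fr_fresh[OF m0SB x(1)] x(2) by simp
    next
      assume "\<exists>m\<in>K. \<exists>v\<in>Dm m. m v = Some (U lam) \<and> w = fr m v"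
      then obtain m1 v1 where m1: "m1 \<in> K" "v1 \<in> Dm m1" "m1 v1 = Some (U lam)" "w = fr m1 v1" by blast
      have "m1 = m0 \<and> v1 = x" using fr_inj[OF K_SB[OF m1(1)] m1(3) m0SB x(1)] m1(4) x(2) by simp
      then have "x \<in> Dm m0" using m1(2) by simp
      from nolit[OF this] show False using x(3) w by (metis)
    qed
  qed
  have "models D' (smt lam fr m0 c) (app_tp m c)" unfolding models_def using wfmu' eqt Dok by blast
  moreover have "smt lam fr m0 c \<in> G'" unfolding G'_def using m0K cC by blast
  ultimately show ?thesis by blast
qed

lemma compl_old: assumes II: "I \<in> instances S" and tI: "t \<in> I" shows "\<exists>tS\<in>G'. models D' tS t"
proof -
  obtain tS \<mu> where tS: "tS \<in> SG" "wf_map \<mu>" "app_tp \<mu> tS = t" "\<forall>v\<in>SD. \<forall>l. \<mu> v \<noteq> Some (L l)"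
    using II tI unfolding instances_def models_def by blast
  define \<mu>2 where "\<mu>2 w = (if w \<in> vars_tp tS then \<mu> w else None)" for w
  have eq: "app_tp \<mu>2 tS = app_tp \<mu> tS" by (rule app_tp_cong) (simp add: \<mu>2_def)
  have wf: "wf_map \<mu>2"
    unfolding wf_map_def
  proof
    fix d assume "d \<in> ran \<mu>2"
    then obtain w where w: "\<mu>2 w = Some d" unfolding ran_def by blast
    then have "\<mu> w = Some d" unfolding \<mu>2_def by (simp split: if_splits)
    then show "\<not> is_var d" using wf_map_D[OF tS(2)] by blast
  qed
  have Dok: "\<forall>v\<in>D'. \<forall>l. \<mu>2 v \<noteq> Some (L l)"
  proof (intro ballI allI notI)
    fix w l assume wD: "w \<in> D'" and w: "\<mu>2 w = Some (L l)"
    then have wv: "w \<in> vars_tp tS" and mw: "\<mu> w = Some (L l)" unfolding \<mu>2_def by (simp_all split: if_splits)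
    have wS: "w \<in> vars SG" using wv tS(1) unfolding vars_def by blast
    from D'_E[OF wD] show False
    proof
      assume "w \<in> SD" then show False using tS(4) mw by blast
    next
      assume "\<exists>m\<in>K. \<exists>v\<in>Dm m. m v = Some (U lam) \<and> w = fr m v"
      then obtain m v where "m \<in> K" "m v = Some (U lam)" "w = fr m v" by blast
      then show False using fr_fresh[OF K_SB] wS by blast
    qed
  qed
  have "models D' tS t" unfolding models_def using wf eq tS(3) Dok by auto
  moreover have "tS \<in> G'" unfolding G'_def using tS(1) by blast
  ultimately show ?thesis by blast
qed

lemma sound_one: assumes t: "is_triple t" and tS: "tS \<in> G'" and md: "models D' tS t"
  shows "\<exists>J\<in>instances S. t \<in> rule_app A C J"
proof -
  obtain \<mu> where mu: "wf_map \<mu>" "app_tp \<mu> tS = t" "\<forall>v\<in>D'. \<forall>l. \<mu> v \<noteq> Some (L l)"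
    using md unfolding models_def by blast
  from tS consider (old) "tS \<in> SG" | (new) m c where "m \<in> K" "c \<in> C" "tS = smt lam fr m c"
    unfolding G'_def by blast
  then show ?thesis
  proof cases
    case old
    have "models SD tS t" using mu SD_D' unfolding models_def by blast
    then have "{t} \<in> instances S" using old t unfolding instances_def is_graph_def by blast
    moreover have "t \<in> rule_app A C {t}" unfolding rule_app_def by simp
    ultimately show ?thesis by blast
  next
    case new
    have "app_tp \<mu> (smt lam fr m c) = t" using mu(2) new(3) by simp
    from sound_new[OF t new(1) new(2) mu(1) this mu(3)] show ?thesis .
  qed
qed

lemma main: "instances (G', D') = (\<Union>I\<in>instances S. {I'. I' \<subseteq> rule_app A C I})"
proof
  show "instances (G', D') \<subseteq> (\<Union>I\<in>instances S. {I'. I' \<subseteq> rule_app A C I})"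
  proof
    fix I' assume I': "I' \<in> instances (G', D')"
    have gI': "is_graph I'" and mI': "\<forall>t\<in>I'. \<exists>tS\<in>G'. models D' tS t"
      using I' unfolding instances_def by simp_all
    have "\<forall>t\<in>I'. \<exists>J. J \<in> instances S \<and> t \<in> rule_app A C J"
    proof
      fix t assume tI: "t \<in> I'"
      then have tt: "is_triple t" using gI' unfolding is_graph_def by blast
      obtain tS where "tS \<in> G'" "models D' tS t" using mI' tI by blast
      from sound_one[OF tt this] show "\<exists>J. J \<in> instances S \<and> t \<in> rule_app A C J" by blast
    qed
    then obtain J where J: "\<forall>t\<in>I'. J t \<in> instances S \<and> t \<in> rule_app A C (J t)" by metis
    define I where "I = (\<Union>t\<in>I'. J t)"
    have fI': "finite I'" using gI' unfolding is_graph_def by blast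
    have gJ: "is_graph (J t)" if "t \<in> I'" for t using J that unfolding instances_def by blast
    have fin: "finite I" unfolding I_def
    proof (rule finite_UN_I[OF fI'])
      fix t assume "t \<in> I'" from gJ[OF this] show "finite (J t)" unfolding is_graph_def by blast
    qed
    have "I \<in> instances S"
    proof -
      have "is_triple x" if "x \<in> I" for x
      proof -
        from that obtain t where "t \<in> I'" "x \<in> J t" unfolding I_def by blast
        then show ?thesis using gJ unfolding is_graph_def by blast
      qed
      moreover have "\<exists>tS\<in>SG. models SD tS x" if "x \<in> I" for x
      proof -
        from that obtain t where "t \<in> I'" "x \<in> J t" unfolding I_def by blast
        then show ?thesis using J unfolding instances_def by blast
      qed
      ultimately show ?thesis unfolding instances_def is_graph_def using fin by blast
    qed
    moreover have "I' \<subseteq> rule_app A C I"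
    proof
      fix t assume tI: "t \<in> I'"
      have "J t \<subseteq> I" unfolding I_def using tI by blast
      then show "t \<in> rule_app A C I" using rule_app_mono J tI by blast
    qed
    ultimately show "I' \<in> (\<Union>I\<in>instances S. {I'. I' \<subseteq> rule_app A C I})" by blast
  qed
  show "(\<Union>I\<in>instances S. {I'. I' \<subseteq> rule_app A C I}) \<subseteq> instances (G', D')"
  proof
    fix I' assume "I' \<in> (\<Union>I\<in>instances S. {I'. I' \<subseteq> rule_app A C I})"
    then obtain I where I: "I \<in> instances S" "I' \<subseteq> rule_app A C I" by blast
    have gI: "is_graph I" using I(1) unfolding instances_def by blast
    have gr: "is_graph (rule_app A C I)" using rule_app_graph[OF gI finA] .
    then have "is_graph I'" using I(2) unfolding is_graph_def by (meson finite_subset subsetD)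
    moreover have "\<forall>t\<in>I'. \<exists>tS\<in>G'. models D' tS t"
    proof
      fix t assume "t \<in> I'"
      then have "t \<in> rule_app A C I" using I(2) by blast
      then consider (a) "t \<in> I" | (b) m where "m \<in> eval A I" "is_graph (app_gp m C)" "t \<in> app_gp m C"
        unfolding rule_app_def by blast
      then show "\<exists>tS\<in>G'. models D' tS t"
      proof cases
        case a then show ?thesis using compl_old[OF I(1)] by blast
      next
        case b
        then obtain c where "c \<in> C" "t = app_tp m c" unfolding app_gp_def by blast
        then show ?thesis using compl_new[OF I(1) b(1) b(2)] by blast
      qed
    qed
    ultimately show "I' \<in> instances (G', D')" unfolding instances_def by simp
  qed
qed

end

theorem theorem2:
  fixes S :: "('u,'l,'v) schema" and A C :: "('u,'l,'v) tp set"
    and lam :: 'u and fr :: "('u,'l,'v) mp \<Rightarrow> 'v \<Rightarrow> 'v"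
  assumes "infinite (UNIV :: 'u set)" and "infinite (UNIV :: 'l set)" and "infinite (UNIV :: 'v set)"
    and "schema_ok S" and "rule_ok A C"
    and "fresh_choice lam fr S A C"
  shows "instances (score lam fr S A C) = (\<Union>I\<in>instances S. {I'. I' \<subseteq> rule_app A C I})"
proof -
  interpret setting S A C lam fr using assms(4-6) by unfold_locales
  show ?thesis using main score_eq by simp
qed

end
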